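(* Let $X$ be a Banach space, $D\subset X$ closed, bounded and convex, and $\tau$ a locally convex topology on $D$ containing the relative weak topology of $D$. Let $C$ be a convex subset of $D$, $\varepsilon>0$, $n,k\in\mathbb{N}$, $\lambda\in S^+_{\ell_1^n}$, $\{x_1,\dots,x_k\}\subset X$, and let $(\widetilde O_i)_{i=1}^n$ be nonempty sets in $\tau|_C$. Then for each $1\le i\le n$ there is a nonempty $\tau|_{\widetilde O_i}$-open set $O_i$ such that $$\operatorname{diam}\Big(\sum_{i=1}^n\lambda(i)O_i\Big)\le SD(\lambda,(O_i))+\varepsilon$$ and $$d\Big(\{x_1,\dots,x_k\},\sum_{i=1}^n\lambda(i)O_i\Big)\ge \frac{SD(\lambda,(O_i))}{2}-\varepsilon.$$
   Context: $\tau|_C$ is the topology induced by $\tau$ on $C$; locally convex means having a basis of convex open sets. $S^+_{\ell_1^n}=\{\lambda\in\mathbb{R}^n:\lambda(i)\ge0,\ \sum_i\lambda(i)=1\}$. Sums of sets are Minkowski sums. For nonempty sets $O_1,\dots,O_n\in\tau|_C$ and $\lambda\in S^+_{\ell_1^n}$, the sub-diameter is $$SD(\lambda,(O_i))=\inf\Big\{\operatorname{diam}\Big(\sum_i\lambda(i)U_i\Big): U_i \text{ nonempty and } U_i\in\tau|_{O_i}\text{ for }1\le i\le n\Big\}.$$ $d(A,B)=\inf\{\|a-b\|:a\in A,b\in B\}$. *)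

theory Defs
  imports "HOL-Analysis.Analysis"
begin

definition weak_topology :: "'a::real_normed_vector topology" where
  "weak_topology = topology_generated_by
     {f -` V | f V. bounded_linear (f :: 'a \<Rightarrow> real) \<and> open V}"

definition locally_convex_top :: "'a::real_vector topology \<Rightarrow> bool" where
  "locally_convex_top T \<longleftrightarrow>
     (\<forall>U x. openin T U \<and> x \<in> U \<longrightarrow> (\<exists>V. openin T V \<and> convex V \<and> x \<in> V \<and> V \<subseteq> U))"

text \<open>Minkowski combination  sum_{i<n} lam(i) U_i  (indices 0..n-1).\<close>
definition msum :: "nat \<Rightarrow> (nat \<Rightarrow> real) \<Rightarrow> (nat \<Rightarrow> 'a::real_vector set) \<Rightarrow> 'a set" where
  "msum n lam U = {(\<Sum>i<n. lam i *\<^sub>R u i) | u. \<forall>i<n. u i \<in> U i}"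

definition simplex_l1 :: "nat \<Rightarrow> (nat \<Rightarrow> real) set" where
  "simplex_l1 n = {lam. (\<forall>i<n. lam i \<ge> 0) \<and> (\<Sum>i<n. lam i) = 1}"

definition SD :: "'a::real_normed_vector topology \<Rightarrow> nat \<Rightarrow> (nat \<Rightarrow> real) \<Rightarrow> (nat \<Rightarrow> 'a set) \<Rightarrow> real" where
  "SD T n lam Os = Inf {diameter (msum n lam U) | U.
      \<forall>i<n. U i \<noteq> {} \<and> openin (subtopology T (Os i)) (U i)}"

end

theory Submission
  imports Defs
begin


definition hbgood :: "('a::real_normed_vector \<times> real) set \<Rightarrow> bool" where
 "hbgood G \<longleftrightarrow> (0,0) \<in> G \<and> (\<forall>x a y b. (x,a)\<in>G \<longrightarrow> (y,b)\<in>G \<longrightarrow> (x+y,a+b)\<in>G)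
   \<and> (\<forall>x a c. (x,a)\<in>G \<longrightarrow> (c *\<^sub>R x, c*a) \<in> G) \<and> (\<forall>x a. (x,a)\<in>G \<longrightarrow> a \<le> norm x)"

lemma hbgood_0: "hbgood G \<Longrightarrow> (0,0) \<in> G" unfolding hbgood_def by blast
lemma hbgood_add: "hbgood G \<Longrightarrow> (x,a)\<in>G \<Longrightarrow> (y,b)\<in>G \<Longrightarrow> (x+y,a+b)\<in>G"
  unfolding hbgood_def by blast
lemma hbgood_scale: "hbgood G \<Longrightarrow> (x,a)\<in>G \<Longrightarrow> (c *\<^sub>R x, c*a)\<in>G"
  unfolding hbgood_def by blast
lemma hbgood_le: "hbgood G \<Longrightarrow> (x,a)\<in>G \<Longrightarrow> a \<le> norm x"
  unfolding hbgood_def by blast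

lemma hbgood_func:
  assumes "hbgood G" "(x,a)\<in>G" "(x,b)\<in>G" shows "a = b"
proof -
  have m: "(-x, -b) \<in> G" "(-x,-a)\<in>G" using assms unfolding hbgood_def
    by (metis scaleR_minus1_left mult_minus1)+
  have "(x + -x, a + -b) \<in> G" "(x + -x, b + -a) \<in> G" using assms m unfolding hbgood_def by blast+
  then have "a - b \<le> 0" "b - a \<le> 0" using assms(1) unfolding hbgood_def by fastforce+
  then show ?thesis by simp
qed

lemma hb_extend:
  assumes g: "hbgood M" and z: "z \<notin> fst ` M"
  shows "\<exists>M'. hbgood M' \<and> M \<subseteq> M' \<and> M' \<noteq> M"
proof -
  define c where "c = Sup {b - norm (y - z) | y b. (y,b)\<in>M}"
  have z0: "(0,0) \<in> M" using g unfolding hbgood_def by blast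
  have key: "b - norm (y - z) \<le> norm (x + z) - a" if "(x,a)\<in>M" "(y,b)\<in>M" for x a y b
  proof -
    have "(x+y, a+b) \<in> M" using g that unfolding hbgood_def by blast
    then have "a + b \<le> norm (x+y)" using g unfolding hbgood_def by blast
    also have "norm (x+y) \<le> norm (x+z) + norm (y - z)"
      using norm_triangle_ineq[of "x+z" "y-z"] by (simp add: algebra_simps)
    finally show ?thesis by simp
  qed
  have ne: "{b - norm (y - z) | y b. (y,b)\<in>M} \<noteq> {}" using z0 by blast
  have bdd: "bdd_above {b - norm (y - z) | y b. (y,b)\<in>M}"
    unfolding bdd_above_def using key[OF z0] by fastforce
  have cup: "b - norm (y - z) \<le> c" if "(y,b)\<in>M" for y b
    unfolding c_def by (rule cSup_upper[OF _ bdd]) (use that in blast)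
  have clow: "c \<le> norm (x + z) - a" if "(x,a)\<in>M" for x a
    unfolding c_def by (rule cSup_least[OF ne]) (use key[OF that] in blast)
  define M' where "M' = {(x + t *\<^sub>R z, a + t*c) | x a t. (x,a)\<in>M}"
  have "hbgood M'"
    unfolding hbgood_def
  proof (intro conjI allI impI)
    show "(0,0) \<in> M'" unfolding M'_def using z0 by force
  next
    fix x a y b assume "(x,a)\<in>M'" "(y,b)\<in>M'"
    then obtain x1 a1 t1 x2 a2 t2 where h: "(x1,a1)\<in>M" "(x2,a2)\<in>M" "x = x1 + t1 *\<^sub>R z" "a = a1 + t1*c"
       "y = x2 + t2 *\<^sub>R z" "b = a2 + t2*c" unfolding M'_def by blast
    have "(x1+x2, a1+a2) \<in> M" using g h unfolding hbgood_def by blast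
    moreover have "x + y = (x1+x2) + (t1+t2) *\<^sub>R z" "a + b = (a1+a2) + (t1+t2)*c"
      using h by (simp_all add: algebra_simps)
    ultimately show "(x+y,a+b)\<in>M'" unfolding M'_def by blast
  next
    fix x a r assume "(x,a)\<in>M'"
    then obtain x1 a1 t1 where h: "(x1,a1)\<in>M" "x = x1 + t1 *\<^sub>R z" "a = a1 + t1*c"
      unfolding M'_def by blast
    have "(r *\<^sub>R x1, r*a1) \<in> M" using g h unfolding hbgood_def by blast
    moreover have "r *\<^sub>R x = r *\<^sub>R x1 + (r*t1) *\<^sub>R z" "r * a = r*a1 + (r*t1)*c"
      using h by (simp_all add: algebra_simps)
    ultimately show "(r *\<^sub>R x, r*a)\<in>M'" unfolding M'_def by blast
  next
    fix x a assume "(x,a)\<in>M'"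
    then obtain x1 a1 t where h: "(x1,a1)\<in>M" "x = x1 + t *\<^sub>R z" "a = a1 + t*c"
      unfolding M'_def by blast
    consider "t = 0" | "t > 0" | "t < 0" by linarith
    then show "a \<le> norm x"
    proof cases
      case 1 then show ?thesis using h g unfolding hbgood_def by simp
    next
      case 2
      have "(inverse t *\<^sub>R x1, inverse t * a1) \<in> M" using g h unfolding hbgood_def by blast
      from clow[OF this] have "t * c \<le> t * (norm (inverse t *\<^sub>R x1 + z) - inverse t * a1)"
        using 2 by (simp add: mult_left_mono)
      also have "\<dots> = norm (t *\<^sub>R (inverse t *\<^sub>R x1 + z)) - a1" using 2
        by (simp add: right_diff_distrib)
      also have "t *\<^sub>R (inverse t *\<^sub>R x1 + z) = x" using 2 h by (simp add: scaleR_add_right)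
      finally show ?thesis using h by simp
    next
      case 3
      define s where "s = -t"
      have s: "s > 0" using 3 s_def by simp
      define w where "w = inverse s *\<^sub>R x1 - z"
      have "(inverse s *\<^sub>R x1, inverse s * a1) \<in> M" using g h unfolding hbgood_def by blast
      from cup[OF this] have i1: "inverse s * a1 - norm w \<le> c" unfolding w_def .
      have sw1: "s *\<^sub>R w = x1 - s *\<^sub>R z" unfolding w_def using s
        by (simp add: scaleR_diff_right)
      have sw2: "x1 - s *\<^sub>R z = x" unfolding h(2) s_def by simp
      have sw: "s *\<^sub>R w = x" using sw1 sw2 by simp
      have e2: "s * norm w = norm x" using s sw[symmetric] by simp
      have "s * (inverse s * a1 - norm w) \<le> s * c" using i1 s by (simp add: mult_left_mono)
      moreover have "s * (inverse s * a1 - norm w) = a1 - s * norm w"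
        using s by (simp add: right_diff_distrib)
      moreover have "s * c = - (t * c)" unfolding s_def by simp
      ultimately have "a1 - norm x \<le> -(t*c)" using e2 by simp
      then show ?thesis using h(3) by simp
    qed
  qed
  moreover have "M \<subseteq> M'"
  proof
    fix p assume "p \<in> M"
    then show "p \<in> M'" unfolding M'_def by (cases p) force
  qed
  moreover have "(z, c) \<in> M'" unfolding M'_def using z0 by force
  moreover have "(z,c) \<notin> M" using z by force
  ultimately show ?thesis by blast
qed

lemma hahn_banach_norming:
  fixes y :: "'a::real_normed_vector"
  shows "\<exists>f. bounded_linear f \<and> f y = norm y \<and> (\<forall>x. \<bar>f x\<bar> \<le> norm x)"
proof -
  define G0 where "G0 = {(t *\<^sub>R y, t * norm y) | t. True}"
  define A where "A = {G. hbgood G \<and> G0 \<subseteq> G}"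
  have g0: "hbgood G0" unfolding hbgood_def G0_def
  proof (intro conjI allI impI)
    show "((0::'a), (0::real)) \<in> {(t *\<^sub>R y, t * norm y) |t. True}" by (rule CollectI, rule exI[of _ 0]) simp
  next
    fix x a x' b assume "(x,a) \<in> {(t *\<^sub>R y, t * norm y) |t. True}" "(x',b) \<in> {(t *\<^sub>R y, t * norm y) |t. True}"
    then obtain t1 t2 where "x = t1 *\<^sub>R y" "a = t1 * norm y" "x' = t2 *\<^sub>R y" "b = t2 * norm y" by blast
    then show "(x+x',a+b) \<in> {(t *\<^sub>R y, t * norm y) |t. True}"
      by (intro CollectI exI[of _ "t1+t2"]) (simp add: algebra_simps)
  next
    fix x a r assume "(x,a) \<in> {(t *\<^sub>R y, t * norm y) |t. True}"
    then obtain t1 where "x = t1 *\<^sub>R y" "a = t1 * norm y" by blast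
    then show "(r *\<^sub>R x, r*a) \<in> {(t *\<^sub>R y, t * norm y) |t. True}"
      by (intro CollectI exI[of _ "r*t1"]) (simp add: algebra_simps)
  next
    fix x a assume "(x,a) \<in> {(t *\<^sub>R y, t * norm y) |t. True}"
    then obtain t1 where "x = t1 *\<^sub>R y" "a = t1 * norm y" by blast
    then show "a \<le> norm x" by (simp add: mult_right_mono)
  qed
  have "\<exists>M\<in>A. \<forall>X\<in>A. M \<subseteq> X \<longrightarrow> X = M"
  proof (rule Zorn_Lemma2, rule ballI)
    fix C assume C: "C \<in> chains A"
    show "\<exists>U\<in>A. \<forall>X\<in>C. X \<subseteq> U"
    proof (cases "C = {}")
      case True then show ?thesis using g0 unfolding A_def by blast
    next
      case False
      have CA: "C \<subseteq> A" and ch: "\<And>X Y. X\<in>C \<Longrightarrow> Y\<in>C \<Longrightarrow> X \<subseteq> Y \<or> Y \<subseteq> X"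
        using C unfolding chains_def chain_subset_def by auto
      have "hbgood (\<Union>C)" unfolding hbgood_def
      proof (intro conjI allI impI)
        obtain X where "X \<in> C" using False by blast
        then show "(0,0) \<in> \<Union>C" using CA hbgood_0 unfolding A_def by blast
      next
        fix x a x' b assume "(x,a)\<in>\<Union>C" "(x',b)\<in>\<Union>C"
        then obtain X Y where "X\<in>C" "Y\<in>C" "(x,a)\<in>X" "(x',b)\<in>Y" by blast
        moreover have "hbgood X" "hbgood Y" using CA \<open>X\<in>C\<close> \<open>Y\<in>C\<close> unfolding A_def by auto
        ultimately show "(x+x',a+b)\<in>\<Union>C" using ch[of X Y] hbgood_add by (metis UnionI subsetD)
      next
        fix x a r assume "(x,a)\<in>\<Union>C"
        then obtain X where "X\<in>C" "(x,a)\<in>X" by blast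
        moreover have "hbgood X" using CA \<open>X\<in>C\<close> unfolding A_def by auto
        ultimately show "(r *\<^sub>R x, r*a) \<in> \<Union>C" using hbgood_scale by blast
      next
        fix x a assume "(x,a)\<in>\<Union>C"
        then obtain X where "X\<in>C" "(x,a)\<in>X" by blast
        moreover have "hbgood X" using CA \<open>X\<in>C\<close> unfolding A_def by auto
        ultimately show "a \<le> norm x" using hbgood_le by blast
      qed
      moreover have "G0 \<subseteq> \<Union>C" using False CA unfolding A_def by blast
      ultimately show ?thesis unfolding A_def by blast
    qed
  qed
  then obtain M where MA: "M \<in> A" and mx: "\<And>X. X\<in>A \<Longrightarrow> M \<subseteq> X \<Longrightarrow> X = M" by blast
  have gM: "hbgood M" and G0M: "G0 \<subseteq> M" using MA unfolding A_def by auto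
  have dom: "\<exists>a. (x,a) \<in> M" for x
  proof (rule ccontr)
    assume "\<nexists>a. (x,a)\<in>M"
    then have "x \<notin> fst ` M" by force
    from hb_extend[OF gM this] obtain M' where "hbgood M'" "M \<subseteq> M'" "M' \<noteq> M" by blast
    moreover have "M' \<in> A" using calculation G0M unfolding A_def by blast
    ultimately show False using mx by blast
  qed
  define f where "f x = (THE a. (x,a)\<in>M)" for x
  have fM: "(x, f x) \<in> M" for x
  proof -
    obtain a where a: "(x,a)\<in>M" using dom by blast
    have "(THE a. (x,a)\<in>M) = a" by (rule the_equality[where P="\<lambda>b. (x,b)\<in>M", OF a hbgood_func[OF gM _ a]])
    then show ?thesis using a f_def by simp
  qed
  have fe: "f x = a" if "(x,a)\<in>M" for x a using hbgood_func[OF gM fM that] .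
  have add: "f (x + x') = f x + f x'" for x x'
    using fe[OF hbgood_add[OF gM fM[of x] fM[of x']]] by simp
  have sc: "f (r *\<^sub>R x) = r *\<^sub>R f x" for r x
    using fe[OF hbgood_scale[OF gM fM[of x], of r]] by simp
  have le: "f x \<le> norm x" for x using hbgood_le[OF gM fM] .
  have ab: "\<bar>f x\<bar> \<le> norm x" for x
    using le[of x] le[of "-x"] sc[of "-1" x] by simp
  have bl: "bounded_linear f"
    by (rule bounded_linear_intro[of f 1]) (use add sc ab in auto)
  have "(y, norm y) \<in> M" using G0M unfolding G0_def by (metis (mono_tags, lifting) CollectI mult_1 scaleR_one subsetD)
  then have "f y = norm y" using fe by blast
  then show ?thesis using bl ab by blast
qed



definition refines :: "'a topology \<Rightarrow> nat \<Rightarrow> (nat \<Rightarrow> 'a set) \<Rightarrow> (nat \<Rightarrow> 'a set) \<Rightarrow> bool" where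
  "refines T n A B \<longleftrightarrow> (\<forall>i<n. B i \<noteq> {} \<and> openin (subtopology T (A i)) (B i))"

lemma openin_sub_trans:
  assumes "openin (subtopology T A) B" "openin (subtopology T B) E"
  shows "openin (subtopology T A) E"
proof -
  obtain T1 where "openin T T1" "B = T1 \<inter> A" using assms(1) unfolding openin_subtopology by blast
  moreover obtain T2 where "openin T T2" "E = T2 \<inter> B" using assms(2) unfolding openin_subtopology by blast
  ultimately have "openin T (T2 \<inter> T1)" "E = (T2 \<inter> T1) \<inter> A"
    by (simp add: openin_Int, blast)
  then show ?thesis unfolding openin_subtopology by blast
qed

lemma refines_trans: "refines T n A B \<Longrightarrow> refines T n B E \<Longrightarrow> refines T n A E"
  unfolding refines_def by (meson openin_sub_trans)

lemma refines_refl: "(\<forall>i<n. A i \<noteq> {} \<and> A i \<subseteq> topspace T) \<Longrightarrow> refines T n A A"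
  unfolding refines_def by (simp add: openin_subtopology_refl)

lemma refines_subset: "refines T n A B \<Longrightarrow> i < n \<Longrightarrow> B i \<subseteq> A i"
  unfolding refines_def by (metis openin_subset topspace_subtopology le_infE)

lemma refines_top: "refines T n A B \<Longrightarrow> i < n \<Longrightarrow> B i \<subseteq> topspace T"
  unfolding refines_def by (metis openin_subset topspace_subtopology le_infE)

lemma msum_mono: "(\<forall>i<n. B i \<subseteq> A i) \<Longrightarrow> msum n lam B \<subseteq> msum n lam A"
  unfolding msum_def by blast

lemma msum_sub:
  assumes "lam \<in> simplex_l1 n" "convex D" "\<forall>i<n. A i \<subseteq> D"
  shows "msum n lam A \<subseteq> D"
proof
  fix z assume "z \<in> msum n lam A"
  then obtain u where u: "z = (\<Sum>i<n. lam i *\<^sub>R u i)" "\<forall>i<n. u i \<in> A i" unfolding msum_def by blast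
  show "z \<in> D" unfolding u(1)
    by (rule convex_sum) (use assms u(2) in \<open>auto simp: simplex_l1_def\<close>)
qed

lemma msum_ne:
  assumes "\<forall>i<n. A i \<noteq> {}" shows "msum n lam A \<noteq> {}"
proof -
  define u where "u i = (SOME x. x \<in> A i)" for i
  have "\<forall>i<n. u i \<in> A i" using assms unfolding u_def by (simp add: some_in_eq)
  then show ?thesis unfolding msum_def by blast
qed

lemma real_aux: "(a::real) - (K - r) / 2 \<le> b \<Longrightarrow> b - c \<le> N \<Longrightarrow> a - c = K \<Longrightarrow> r < K \<Longrightarrow> r < N"
  by argo

lemma push_away:
  fixes D :: "'a::real_normed_vector set"
  assumes top: "topspace \<tau> = D"
    and wk: "\<forall>U. openin (subtopology weak_topology D) U \<longrightarrow> openin \<tau> U"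
    and lam: "lam \<in> simplex_l1 n"
    and VD: "\<forall>i<n. V i \<subseteq> D" and uV: "\<forall>i<n. u i \<in> V i"
    and r: "r < norm ((\<Sum>i<n. lam i *\<^sub>R u i) - x)"
  shows "\<exists>V'. refines \<tau> n V V' \<and> (\<forall>z\<in>msum n lam V'. r < dist z x)"
proof -
  define y where "y = (\<Sum>i<n. lam i *\<^sub>R u i)"
  obtain f where bl: "bounded_linear f" and fy: "f (y - x) = norm (y - x)" and fb: "\<And>w. \<bar>f w\<bar> \<le> norm w"
    using hahn_banach_norming[of "y - x"] by blast
  define e where "e = (norm (y - x) - r) / 2"
  have e: "e > 0" using r unfolding e_def y_def by simp
  define W where "W i = D \<inter> f -` {f (u i) - e <..}" for i
  have Wo: "openin \<tau> (W i)" for i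
  proof -
    have "openin weak_topology (f -` {f (u i) - e <..})"
      unfolding weak_topology_def
      by (rule topology_generated_by_Basis, intro CollectI exI[of _ f] exI[of _ "{f (u i) - e <..}"])
        (simp add: bl)
    then have "openin (subtopology weak_topology D) (W i)"
      unfolding W_def openin_subtopology by blast
    then show ?thesis using wk by blast
  qed
  define V' where "V' i = W i \<inter> V i" for i
  have ref: "refines \<tau> n V V'"
    unfolding refines_def
  proof (intro allI impI conjI)
    fix i assume i: "i < n"
    have "u i \<in> V i" "u i \<in> D" using i uV VD by auto
    then have "u i \<in> V' i" using e unfolding V'_def W_def by simp
    then show "V' i \<noteq> {}" by blast
    show "openin (subtopology \<tau> (V i)) (V' i)" unfolding V'_def openin_subtopology using Wo by blast
  qed
  have lin: "f (\<Sum>i<n. lam i *\<^sub>R v i) = (\<Sum>i<n. lam i * f (v i))" for v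
    using bl by (simp add: linear_sum bounded_linear.linear linear_scale)
  have fd: "f (a - b) = f a - f b" for a b using bl by (simp add: linear_diff bounded_linear.linear)
  have lam0: "\<forall>i<n. 0 \<le> lam i" "(\<Sum>i<n. lam i) = 1" using lam unfolding simplex_l1_def by auto
  have far: "r < dist z x" if zin: "z \<in> msum n lam V'" for z
  proof -
    obtain v where v: "z = (\<Sum>i<n. lam i *\<^sub>R v i)" "\<forall>i<n. v i \<in> V' i"
      using zin unfolding msum_def by blast
    have "\<forall>i<n. f (u i) - e < f (v i)" using v(2) unfolding V'_def W_def by auto
    then have "(\<Sum>i<n. lam i * (f (u i) - e)) \<le> (\<Sum>i<n. lam i * f (v i))"
      using lam0 by (intro sum_mono mult_left_mono) auto
    also have "(\<Sum>i<n. lam i * (f (u i) - e)) = (\<Sum>i<n. lam i * f (u i)) - e * (\<Sum>i<n. lam i)"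
      by (simp add: right_diff_distrib sum_subtractf sum_distrib_left mult.commute)
    finally have "f y - e \<le> f z" using lam0(2) lin[of u] lin[of v] v(1) unfolding y_def by simp
    moreover have "f z - f x \<le> norm (z - x)" using fb[of "z - x"] fd by simp
    moreover have "f y - f x = norm (y - x)" using fy fd by simp
    moreover have "r < norm (y - x)" using r unfolding y_def .
    ultimately show ?thesis unfolding e_def dist_norm by (rule real_aux)
  qed
  show ?thesis using ref far by blast
qed


definition goodfam :: "'a::real_normed_vector topology \<Rightarrow> nat \<Rightarrow> (nat \<Rightarrow> real) \<Rightarrow> (nat \<Rightarrow> 'a set) \<Rightarrow> bool" where
  "goodfam T n lam A \<longleftrightarrow> (\<forall>i<n. A i \<noteq> {} \<and> A i \<subseteq> topspace T) \<and> bounded (msum n lam A)"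

lemma SD_alt: "SD T n lam A = Inf {diameter (msum n lam U) | U. refines T n A U}"
  unfolding SD_def refines_def by simp

lemma DS_facts:
  assumes "goodfam T n lam A"
  shows "diameter (msum n lam A) \<in> {diameter (msum n lam U) | U. refines T n A U}"
    and "bdd_below {diameter (msum n lam U) | U. refines T n A U}"
proof -
  show "diameter (msum n lam A) \<in> {diameter (msum n lam U) | U. refines T n A U}"
    using assms refines_refl[of n A T] unfolding goodfam_def by blast
  have "0 \<le> diameter (msum n lam U)" if "refines T n A U" for U
  proof -
    have "msum n lam U \<subseteq> msum n lam A" using refines_subset[OF that] by (intro msum_mono) blast
    then have "bounded (msum n lam U)" using assms unfolding goodfam_def using bounded_subset by blast
    then show ?thesis by (rule diameter_ge_0)
  qed
  then show "bdd_below {diameter (msum n lam U) | U. refines T n A U}"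
    unfolding bdd_below_def by blast
qed

lemma SD_le_diam:
  assumes "goodfam T n lam A"
  shows "SD T n lam A \<le> diameter (msum n lam A)" "0 \<le> SD T n lam A"
proof -
  show "SD T n lam A \<le> diameter (msum n lam A)" unfolding SD_alt
    by (rule cInf_lower[OF DS_facts(1)[OF assms] DS_facts(2)[OF assms]])
  have "0 \<le> diameter (msum n lam U)" if "refines T n A U" for U
  proof -
    have "msum n lam U \<subseteq> msum n lam A" using refines_subset[OF that] by (intro msum_mono) blast
    then have "bounded (msum n lam U)" using assms unfolding goodfam_def using bounded_subset by blast
    then show ?thesis by (rule diameter_ge_0)
  qed
  then show "0 \<le> SD T n lam A" unfolding SD_alt
    by (intro cInf_greatest) (use DS_facts(1)[OF assms] in blast, blast)
qed

lemma SD_mono: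
  assumes "goodfam T n lam A" "refines T n A B"
  shows "SD T n lam A \<le> SD T n lam B"
proof -
  have gB: "goodfam T n lam B"
    unfolding goodfam_def
  proof (intro conjI allI impI)
    fix i assume "i < n"
    then show "B i \<noteq> {}" "B i \<subseteq> topspace T" using assms(2) refines_top[OF assms(2)]
      unfolding refines_def by auto
  next
    have "msum n lam B \<subseteq> msum n lam A" using refines_subset[OF assms(2)] by (intro msum_mono) blast
    then show "bounded (msum n lam B)" using assms(1) unfolding goodfam_def using bounded_subset by blast
  qed
  show ?thesis unfolding SD_alt
  proof (rule cInf_superset_mono)
    show "{diameter (msum n lam U) |U. refines T n B U} \<noteq> {}" using DS_facts(1)[OF gB] by blast
    show "bdd_below {diameter (msum n lam U) |U. refines T n A U}" using DS_facts(2)[OF assms(1)] .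
    show "{diameter (msum n lam U) |U. refines T n B U} \<subseteq> {diameter (msum n lam U) |U. refines T n A U}"
      using refines_trans[OF assms(2)] by blast
  qed
qed

lemma SD_lessD:
  assumes "goodfam T n lam A" "SD T n lam A < c"
  shows "\<exists>U. refines T n A U \<and> diameter (msum n lam U) < c"
proof -
  have "\<exists>x\<in>{diameter (msum n lam U) |U. refines T n A U}. x < c"
    by (rule cInf_lessD) (use DS_facts(1)[OF assms(1)] assms(2) in \<open>auto simp: SD_alt\<close>)
  then show ?thesis by blast
qed


theorem lemma2p4:
  fixes D C :: "'a::banach set"
    and \<tau> :: "'a topology"
    and \<epsilon> :: real and n :: nat and lam :: "nat \<Rightarrow> real"
    and F :: "'a set"
    and Ot :: "nat \<Rightarrow> 'a set"
  assumes "closed D" "bounded D" "convex D"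
    and "topspace \<tau> = D"
    and "locally_convex_top \<tau>"
    and "\<forall>U. openin (subtopology weak_topology D) U \<longrightarrow> openin \<tau> U"
    and "convex C" "C \<subseteq> D"
    and "\<epsilon> > 0"
    and "lam \<in> simplex_l1 n"
    and "finite F" "F \<noteq> {}"
    and "\<forall>i<n. Ot i \<noteq> {} \<and> openin (subtopology \<tau> C) (Ot i)"
  shows "\<exists>Os. (\<forall>i<n. Os i \<noteq> {} \<and> openin (subtopology \<tau> (Ot i)) (Os i))
           \<and> diameter (msum n lam Os) \<le> SD \<tau> n lam Os + \<epsilon>
           \<and> setdist F (msum n lam Os) \<ge> SD \<tau> n lam Os / 2 - \<epsilon>"
proof -
  note bD = assms(2) and cD = assms(3) and top = assms(4) and wk = assms(6)
    and ep = assms(9) and lam = assms(10) and fin = assms(11) and Fne = assms(12) and Ot = assms(13)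
  have OtD: "\<forall>i<n. Ot i \<noteq> {} \<and> Ot i \<subseteq> topspace \<tau>"
  proof (intro allI impI conjI)
    fix i assume i: "i < n"
    show "Ot i \<noteq> {}" using Ot i by blast
    have "Ot i \<subseteq> topspace (subtopology \<tau> C)" using Ot i openin_subset by blast
    then show "Ot i \<subseteq> topspace \<tau>" by simp
  qed
  have admOt: "refines \<tau> n Ot Ot" by (rule refines_refl[OF OtD])
  have admD: "\<forall>i<n. B i \<subseteq> D" if "refines \<tau> n Ot B" for B
    using refines_top[OF that] top by blast
  have msD: "msum n lam B \<subseteq> D" if "refines \<tau> n Ot B" for B
    using msum_sub[OF lam cD admD[OF that]] .
  have good: "goodfam \<tau> n lam B" if "refines \<tau> n Ot B" for B
    unfolding goodfam_def
  proof (intro conjI allI impI)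
    fix i assume "i < n"
    then show "B i \<noteq> {}" "B i \<subseteq> topspace \<tau>" using that refines_top[OF that]
      unfolding refines_def by auto
  next
    show "bounded (msum n lam B)" using msD[OF that] bD bounded_subset by blast
  qed
  have msne: "msum n lam B \<noteq> {}" if "refines \<tau> n Ot B" for B
    using that unfolding refines_def by (intro msum_ne) blast
  have SDD: "SD \<tau> n lam B \<le> diameter D" if "refines \<tau> n Ot B" for B
    using SD_le_diam(1)[OF good[OF that]] diameter_subset[OF msD[OF that] bD] by simp
  define S where "S = {SD \<tau> n lam B | B. refines \<tau> n Ot B}"
  define \<sigma> where "\<sigma> = Sup S"
  have Sne: "S \<noteq> {}" unfolding S_def using admOt by blast
  have Sbdd: "bdd_above S"
  proof (rule bdd_aboveI)
    fix x assume "x \<in> S"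
    then obtain B where "refines \<tau> n Ot B" "x = SD \<tau> n lam B" unfolding S_def by blast
    then show "x \<le> diameter D" using SDD by simp
  qed
  have SDs: "SD \<tau> n lam B \<le> \<sigma>" if "refines \<tau> n Ot B" for B
    unfolding \<sigma>_def by (rule cSup_upper[OF _ Sbdd]) (use that S_def in blast)
  obtain B0 where B0: "refines \<tau> n Ot B0" "\<sigma> - \<epsilon> < SD \<tau> n lam B0"
  proof -
    have "\<exists>B. refines \<tau> n Ot B \<and> \<sigma> - \<epsilon> < SD \<tau> n lam B"
    proof (rule ccontr)
      assume "\<not> ?thesis"
      then have "\<And>x. x\<in>S \<Longrightarrow> x \<le> \<sigma> - \<epsilon>" unfolding S_def by auto
      then have "\<sigma> \<le> \<sigma> - \<epsilon>" unfolding \<sigma>_def by (rule cSup_least[OF Sne])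
      then show False using ep by simp
    qed
    then show ?thesis using that by blast
  qed
  obtain U where U: "refines \<tau> n B0 U" "diameter (msum n lam U) < SD \<tau> n lam B0 + \<epsilon>"
    using SD_lessD[OF good[OF B0(1)], of "SD \<tau> n lam B0 + \<epsilon>"] ep by auto
  have admU: "refines \<tau> n Ot U" using refines_trans[OF B0(1) U(1)] .
  have SDU: "SD \<tau> n lam B0 \<le> SD \<tau> n lam U" using SD_mono[OF good[OF B0(1)] U(1)] .
  have claim: "\<forall>A. refines \<tau> n Ot A \<and> \<sigma> - \<epsilon> < SD \<tau> n lam A \<longrightarrow>
      (\<exists>V. refines \<tau> n A V \<and> (\<forall>x\<in>G. \<forall>z\<in>msum n lam V. \<sigma>/2 - \<epsilon> < dist z x))"
    if "finite G" for G :: "'a set"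
    using that
  proof (induction G rule: finite_induct)
    case empty
    show ?case
    proof (intro allI impI)
      fix A assume "refines \<tau> n Ot A \<and> \<sigma> - \<epsilon> < SD \<tau> n lam A"
      then have "goodfam \<tau> n lam A" using good by blast
      then have "refines \<tau> n A A" unfolding goodfam_def by (intro refines_refl) blast
      then show "\<exists>V. refines \<tau> n A V \<and> (\<forall>x\<in>{}. \<forall>z\<in>msum n lam V. \<sigma>/2 - \<epsilon> < dist z x)" by blast
    qed
  next
    case (insert x G)
    show ?case
    proof (intro allI impI, elim conjE)
      fix A assume aA: "refines \<tau> n Ot A" and sA: "\<sigma> - \<epsilon> < SD \<tau> n lam A"
      have dA: "\<sigma> - \<epsilon> < diameter (msum n lam A)" using sA SD_le_diam(1)[OF good[OF aA]] by simp
      obtain y1 y2 where y: "y1 \<in> msum n lam A" "y2 \<in> msum n lam A" "\<sigma> - \<epsilon> < norm (y1 - y2)"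
      proof -
        have "\<exists>y1\<in>msum n lam A. \<exists>y2\<in>msum n lam A. \<sigma> - \<epsilon> < norm (y1 - y2)"
        proof (rule ccontr)
          assume nt: "\<not> (\<exists>y1\<in>msum n lam A. \<exists>y2\<in>msum n lam A. \<sigma> - \<epsilon> < norm (y1 - y2))"
          have "diameter (msum n lam A) \<le> \<sigma> - \<epsilon>"
          proof (rule diameter_le)
            show "msum n lam A \<noteq> {} \<or> 0 \<le> \<sigma> - \<epsilon>" using msne[OF aA] by blast
            fix a b assume "a \<in> msum n lam A" "b \<in> msum n lam A"
            then have "\<not> \<sigma> - \<epsilon> < norm (a - b)" using nt by blast
            then show "norm (a - b) \<le> \<sigma> - \<epsilon>" by simp
          qed
          then show False using dA by simp
        qed
        then show ?thesis using that by blast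
      qed
      have tri: "norm (y1 - y2) \<le> norm (y1 - x) + norm (y2 - x)"
        using norm_triangle_ineq4[of "y1 - x" "y2 - x"] by simp
      obtain y where yA: "y \<in> msum n lam A" and yx: "\<sigma>/2 - \<epsilon> < norm (y - x)"
      proof (cases "\<sigma>/2 - \<epsilon> < norm (y1 - x)")
        case True then show ?thesis using that y(1) by blast
      next
        case False
        then have "\<sigma>/2 - \<epsilon> < norm (y2 - x)" using tri y(3) ep by argo
        then show ?thesis using that y(2) by blast
      qed
      obtain u where u: "y = (\<Sum>i<n. lam i *\<^sub>R u i)" "\<forall>i<n. u i \<in> A i"
        using yA unfolding msum_def by blast
      obtain V1 where V1: "refines \<tau> n A V1" "\<forall>z\<in>msum n lam V1. \<sigma>/2 - \<epsilon> < dist z x"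
        using push_away[OF top wk lam admD[OF aA] u(2), of "\<sigma>/2 - \<epsilon>" x] yx u(1) by blast
      have aV1: "refines \<tau> n Ot V1" using refines_trans[OF aA V1(1)] .
      have sV1: "\<sigma> - \<epsilon> < SD \<tau> n lam V1" using sA SD_mono[OF good[OF aA] V1(1)] by simp
      obtain V2 where V2: "refines \<tau> n V1 V2" "\<forall>x\<in>G. \<forall>z\<in>msum n lam V2. \<sigma>/2 - \<epsilon> < dist z x"
        using insert.IH aV1 sV1 by blast
      have sub: "msum n lam V2 \<subseteq> msum n lam V1" using refines_subset[OF V2(1)] by (intro msum_mono) blast
      show "\<exists>V. refines \<tau> n A V \<and> (\<forall>x\<in>insert x G. \<forall>z\<in>msum n lam V. \<sigma>/2 - \<epsilon> < dist z x)"
        using refines_trans[OF V1(1) V2(1)] V2(2) V1(2) sub by blast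
    qed
  qed
  obtain V where V: "refines \<tau> n U V" "\<forall>x\<in>F. \<forall>z\<in>msum n lam V. \<sigma>/2 - \<epsilon> < dist z x"
    using claim[OF fin] admU B0(2) SDU by force
  have admV: "refines \<tau> n Ot V" using refines_trans[OF admU V(1)] .
  have SDV: "SD \<tau> n lam U \<le> SD \<tau> n lam V" using SD_mono[OF good[OF admU] V(1)] .
  have "msum n lam V \<subseteq> msum n lam U" using refines_subset[OF V(1)] by (intro msum_mono) blast
  then have "diameter (msum n lam V) \<le> diameter (msum n lam U)"
    using good[OF admU] unfolding goodfam_def by (intro diameter_subset) auto
  then have d1: "diameter (msum n lam V) \<le> SD \<tau> n lam V + \<epsilon>" using U(2) SDU SDV by simp
  have sV: "SD \<tau> n lam V \<le> \<sigma>" using SDs[OF admV] .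
  have d2: "SD \<tau> n lam V / 2 - \<epsilon> \<le> setdist F (msum n lam V)"
    unfolding le_setdist_iff
  proof (intro conjI ballI impI)
    fix x z assume "x \<in> F" "z \<in> msum n lam V"
    then have "\<sigma>/2 - \<epsilon> < dist z x" using V(2) by blast
    then show "SD \<tau> n lam V / 2 - \<epsilon> \<le> dist x z" using sV by (simp add: dist_commute)
  next
    assume "F = {} \<or> msum n lam V = {}"
    then show "SD \<tau> n lam V / 2 - \<epsilon> \<le> 0" using Fne msne[OF admV] by blast
  qed
  show ?thesis using admV d1 d2 unfolding refines_def by blast
qed

end
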